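(* Let $\mathcal{X}$ be a Banach space (complex scalars) and $T \in \mathcal{L}(\mathcal{X})$. Suppose there is a subspace $Y \subset \mathcal{X}$ such that $T|_Y$ is an isomorphism (onto its image) and $d(Y, TY) > 0$. Then for every $\lambda \in \mathbb{C}$, $(T - \lambda I)|_Y$ is an isomorphism and $d(Y, (T - \lambda I)Y) > 0$.
   Context: For subspaces $\mathcal{U}, \mathcal{V}$ of a Banach space, $d(\mathcal{U},\mathcal{V}) = \inf\{\|u - v\| : u \in \mathcal{U}, \|u\|=1, v \in \mathcal{V}\}$. *)

theory Defs
  imports "HOL-Analysis.Analysis"
begin

text \<open>A complex Banach
space is modelled as a real Banach space (type class banach) together with a
complex scalar multiplication sc that extends the real one, is a module action,
and is compatible with the norm.\<close>

definition complex_scaling :: "(complex \<Rightarrow> 'a::real_normed_vector \<Rightarrow> 'a) \<Rightarrow> bool" where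
  "complex_scaling sc \<longleftrightarrow>
     (\<forall>a b x. sc (a + b) x = sc a x + sc b x) \<and>
     (\<forall>a x y. sc a (x + y) = sc a x + sc a y) \<and>
     (\<forall>a b x. sc a (sc b x) = sc (a * b) x) \<and>
     (\<forall>x. sc 1 x = x) \<and>
     (\<forall>r x. sc (complex_of_real r) x = r *\<^sub>R x) \<and>
     (\<forall>a x. norm (sc a x) = cmod a * norm x)"

definition bounded_clinear_op :: "(complex \<Rightarrow> 'a::real_normed_vector \<Rightarrow> 'a) \<Rightarrow> ('a \<Rightarrow> 'a) \<Rightarrow> bool" where
  "bounded_clinear_op sc T \<longleftrightarrow> bounded_linear T \<and> (\<forall>c x. T (sc c x) = sc c (T x))"

definition csubspace :: "(complex \<Rightarrow> 'a::real_normed_vector \<Rightarrow> 'a) \<Rightarrow> 'a set \<Rightarrow> bool" where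
  "csubspace sc Y \<longleftrightarrow> subspace Y \<and> (\<forall>c. \<forall>y\<in>Y. sc c y \<in> Y)"

definition iso_on :: "('a::real_normed_vector \<Rightarrow> 'a) \<Rightarrow> 'a set \<Rightarrow> bool" where
  "iso_on S Y \<longleftrightarrow> inj_on S Y \<and> (\<exists>C. \<forall>y\<in>Y. norm y \<le> C * norm (S y))"

definition subspace_gap :: "'a::real_normed_vector set \<Rightarrow> 'a set \<Rightarrow> real" where
  "subspace_gap U V = Inf {norm (u - v) | u v. u \<in> U \<and> norm u = 1 \<and> v \<in> V}"

end

theory Submission
  imports Defs
begin

theorem mainTheorem7:
  fixes sc :: "complex \<Rightarrow> 'a::banach \<Rightarrow> 'a"
    and T :: "'a \<Rightarrow> 'a"
    and Y :: "'a set"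
  assumes "complex_scaling sc"
    and "bounded_clinear_op sc T"
    and "csubspace sc Y" and "closed Y"
    and "iso_on T Y"
    and "subspace_gap Y (T ` Y) > 0"
  shows "\<forall>mu::complex. iso_on (\<lambda>x. T x - sc mu x) Y \<and>
            subspace_gap Y ((\<lambda>x. T x - sc mu x) ` Y) > 0"
proof
  fix mu :: complex
  have sc_add: "\<And>a x y. sc a (x + y) = sc a x + sc a y"
    and sc_norm: "\<And>a x. norm (sc a x) = cmod a * norm x"
    and sc_real: "\<And>r x. sc (complex_of_real r) x = r *\<^sub>R x"
    using assms(1) unfolding complex_scaling_def by auto
  have sc_diff: "\<And>a x y. sc a (x - y) = sc a x - sc a y"
    by (metis sc_add diff_add_cancel eq_diff_eq)
  have sc0: "\<And>x. sc 0 x = 0" using sc_real[of 0] by simp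
  have lin: "linear T" using assms(2) unfolding bounded_clinear_op_def
    using bounded_linear.linear by blast
  have Ysub: "subspace Y" and Ysc: "\<And>c y. y\<in>Y \<Longrightarrow> sc c y \<in> Y"
    using assms(3) unfolding csubspace_def by auto
  obtain C where C: "\<forall>y\<in>Y. norm y \<le> C * norm (T y)"
    using assms(5) unfolding iso_on_def by auto
  define C' where "C' = max C 1"
  have C'pos: "C' > 0" unfolding C'_def by simp
  have C': "\<And>y. y\<in>Y \<Longrightarrow> norm y \<le> C' * norm (T y)"
  proof -
    fix y assume "y \<in> Y"
    hence "norm y \<le> C * norm (T y)" using C by auto
    also have "\<dots> \<le> C' * norm (T y)" unfolding C'_def by (intro mult_right_mono) auto
    finally show "norm y \<le> C' * norm (T y)" .
  qed
  define S where "S = {norm (u - v) | u v. u \<in> Y \<and> norm u = 1 \<and> v \<in> T ` Y}"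
  define \<delta> where "\<delta> = subspace_gap Y (T ` Y)"
  have dpos: "\<delta> > 0" using assms(6) \<delta>_def by simp
  have dS: "\<delta> = Inf S" unfolding \<delta>_def S_def subspace_gap_def by simp
  have bddS: "bdd_below S" by (rule bdd_belowI[of _ 0]) (auto simp: S_def)
  have H: "\<And>w z. w \<in> Y \<Longrightarrow> z \<in> Y \<Longrightarrow> \<delta> * norm w \<le> norm (w - T z)"
  proof -
    fix w z assume w: "w\<in>Y" and z: "z\<in>Y"
    show "\<delta> * norm w \<le> norm (w - T z)"
    proof (cases "w = 0")
      case True thus ?thesis by simp
    next
      case False
      define n where "n = norm w"
      have n: "n > 0" using False n_def by simp
      have u: "(1/n) *\<^sub>R w \<in> Y" by (simp add: subspace_scale Ysub w)
      have un: "norm ((1/n) *\<^sub>R w) = 1" using n n_def by simp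
      have v: "T ((1/n) *\<^sub>R z) \<in> T ` Y" using subspace_scale[OF Ysub z] by auto
      have "norm ((1/n) *\<^sub>R w - T ((1/n) *\<^sub>R z)) \<in> S"
        unfolding S_def using u un v by blast
      hence le: "\<delta> \<le> norm ((1/n) *\<^sub>R w - T ((1/n) *\<^sub>R z))"
        using dS bddS cInf_lower by auto
      have eq: "(1/n) *\<^sub>R w - T ((1/n) *\<^sub>R z) = (1/n) *\<^sub>R (w - T z)"
        using linear_scale[OF lin] by (simp add: scaleR_diff_right)
      have "\<delta> \<le> norm (w - T z) / n" using le eq n by simp
      thus ?thesis using n n_def by (simp add: pos_le_divide_eq mult.commute)
    qed
  qed
  define K where "K = cmod mu"
  have Kge: "K \<ge> 0" unfolding K_def by simp
  define c where "c = (if mu = 0 then 1/C' else \<delta> * K)"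
  have cpos: "c > 0" unfolding c_def K_def using C'pos dpos by auto
  have bound: "\<And>y. y \<in> Y \<Longrightarrow> c * norm y \<le> norm (T y - sc mu y)"
  proof -
    fix y assume y: "y \<in> Y"
    show "c * norm y \<le> norm (T y - sc mu y)"
    proof (cases "mu = 0")
      case True
      have "norm y \<le> C' * norm (T y)" using C' y by auto
      thus ?thesis using True C'pos sc0 by (simp add: c_def field_simps)
    next
      case False
      have "\<delta> * norm (sc mu y) \<le> norm (sc mu y - T y)" using H Ysc y by auto
      thus ?thesis using False by (simp add: c_def sc_norm K_def norm_minus_commute mult.assoc)
    qed
  qed
  have iso: "iso_on (\<lambda>x. T x - sc mu x) Y"
    unfolding iso_on_def
  proof
    show "inj_on (\<lambda>x. T x - sc mu x) Y"
    proof (rule inj_onI)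
      fix x y assume x: "x \<in> Y" and y: "y \<in> Y" and e: "T x - sc mu x = T y - sc mu y"
      have "T (x - y) - sc mu (x - y) = 0"
        using e by (simp add: linear_diff[OF lin] sc_diff algebra_simps)
      hence "c * norm (x - y) \<le> 0" using bound[of "x - y"] subspace_diff[OF Ysub x y] by simp
      thus "x = y" using cpos by (simp add: mult_le_0_iff)
    qed
    show "\<exists>C. \<forall>y\<in>Y. norm y \<le> C * norm (T y - sc mu y)"
    proof (intro exI ballI)
      fix y assume "y \<in> Y"
      hence "c * norm y \<le> norm (T y - sc mu y)" by (rule bound)
      thus "norm y \<le> 1/c * norm (T y - sc mu y)" using cpos by (simp add: field_simps)
    qed
  qed
  define S' where "S' = {norm (u - v) | u v. u \<in> Y \<and> norm u = 1 \<and> v \<in> (\<lambda>x. T x - sc mu x) ` Y}"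
  have gap: "subspace_gap Y ((\<lambda>x. T x - sc mu x) ` Y) > 0"
  proof (cases "\<exists>u\<in>Y. norm u = 1")
    case False
    hence "S' = S" unfolding S_def S'_def by auto
    thus ?thesis using dpos dS unfolding subspace_gap_def S'_def by simp
  next
    case True
    then obtain u0 where u0: "u0 \<in> Y" "norm u0 = 1" by auto
    have "norm (u0 - (T 0 - sc mu 0)) \<in> S'" unfolding S'_def using u0 subspace_0[OF Ysub] by blast
    hence ne: "S' \<noteq> {}" by auto
    define P where "P = (K + 1) * C'"
    have Ppos: "P > 0" unfolding P_def using Kge C'pos by simp
    define \<epsilon> where "\<epsilon> = min (1/2) (1/(4*P))"
    have epos: "\<epsilon> > 0" unfolding \<epsilon>_def using Ppos by simp
    have e2: "\<epsilon> \<le> 1/2" unfolding \<epsilon>_def by simp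
    have Pe: "P * \<epsilon> \<le> 1/4"
    proof -
      have "P * \<epsilon> \<le> P * (1/(4*P))" unfolding \<epsilon>_def using Ppos by (intro mult_left_mono) auto
      thus ?thesis using Ppos by simp
    qed
    have KC: "K * C' \<le> P" unfolding P_def using C'pos by (simp add: algebra_simps)
    define m where "m = min (\<delta> * \<epsilon>) (1/(4*P))"
    have mpos: "m > 0" unfolding m_def using dpos epos Ppos by simp
    have low: "\<And>x. x \<in> S' \<Longrightarrow> m \<le> x"
    proof -
      fix x assume "x \<in> S'"
      then obtain u z where u: "u \<in> Y" "norm u = 1" and z: "z \<in> Y"
        and xe: "x = norm (u - (T z - sc mu z))" unfolding S'_def by auto
      define w where "w = u + sc mu z"
      have wY: "w \<in> Y" unfolding w_def using u z Ysc subspace_add[OF Ysub] by auto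
      have xw: "x = norm (w - T z)" using xe by (simp add: w_def algebra_simps)
      define N where "N = norm (w - T z)"
      show "m \<le> x"
      proof (cases "norm w \<ge> \<epsilon>")
        case True
        have "\<delta> * \<epsilon> \<le> \<delta> * norm w" using True dpos by simp
        also have "\<dots> \<le> x" using H[OF wY z] xw by simp
        finally show ?thesis unfolding m_def by simp
      next
        case False
        have "1 = norm (w - sc mu z)" using u by (simp add: w_def)
        also have "\<dots> \<le> norm w + K * norm z" using norm_triangle_ineq4[of w "sc mu z"]
          by (simp add: sc_norm K_def)
        finally have 1: "1 \<le> norm w + K * norm z" .
        have Tz: "norm (T z) \<le> norm w + N" unfolding N_def
          using norm_triangle_ineq4[of w "w - T z"] by simp
        have "K * norm z \<le> K * (C' * norm (T z))" using C'[OF z] Kge by (rule mult_left_mono)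
        also have "\<dots> \<le> K * (C' * (norm w + N))" using Tz Kge C'pos
          by (intro mult_left_mono) auto
        also have "\<dots> \<le> K * (C' * (\<epsilon> + N))" using False Kge C'pos
          by (intro mult_left_mono) auto
        finally have 2: "K * norm z \<le> K * C' * \<epsilon> + K * C' * N" by (simp add: algebra_simps)
        have N0: "N \<ge> 0" unfolding N_def by simp
        have "K * C' * \<epsilon> \<le> P * \<epsilon>" using KC epos by (intro mult_right_mono) auto
        moreover have "K * C' * N \<le> P * N" using KC N0 by (rule mult_right_mono)
        ultimately have "1 \<le> \<epsilon> + 1/4 + P * N" using 1 2 Pe False by linarith
        hence "1/4 \<le> P * N" using e2 by linarith
        hence "1/(4*P) \<le> N" using Ppos by (simp add: field_simps)
        thus ?thesis unfolding m_def using xw N_def by simp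
      qed
    qed
    have "m \<le> Inf S'" using ne low by (rule cInf_greatest)
    thus ?thesis using mpos unfolding subspace_gap_def S'_def by simp
  qed
  show "iso_on (\<lambda>x. T x - sc mu x) Y \<and> subspace_gap Y ((\<lambda>x. T x - sc mu x) ` Y) > 0"
    using iso gap by simp
qed

end
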